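(* For every $n\ge1$ and $t\in(0,1)$, $$n\beta+n(n+\gamma)t-(2n+\alpha+\beta+\gamma)(t-1)r_n+(2n+\alpha+\beta+\gamma)ty_n+(t-1)\sum_{j=0}^{n-1}R_j=0.$$
   Context: Fix $\alpha,\beta,\gamma>0$ and real constants $A,B$ with $A\ge0$, $A+B\ge0$, not both $A$ and $A+B$ equal to $0$. Let $\theta$ be the Heaviside function. For $t\in(0,1)$ put $w(x)=x^{\alpha}(1-x)^{\beta}|x-t|^{\gamma}(A+B\theta(x-t))$ on $[0,1]$. Let $P_n$ be the monic orthogonal polynomials w.r.t. $w$ on $[0,1]$ with $\int_0^1P_mP_nw\,dx=h_n\delta_{mn}$. Define $R_n=\frac{\beta}{h_n}\int_0^1\frac{P_n^2(y)w(y)}{1-y}dy$, and for $n\ge1$, $y_n=\frac{\alpha}{h_{n-1}}\int_0^1\frac{P_nP_{n-1}w}{y}dy$, $r_n=\frac{\beta}{h_{n-1}}\int_0^1\frac{P_nP_{n-1}w}{1-y}dy$. *)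

theory Defs
  imports "HOL-Analysis.Analysis" "HOL-Computational_Algebra.Polynomial"
begin

text \<open>Heaviside function (value at 0 is irrelevant for the integrals).\<close>
definition heaviside :: "real \<Rightarrow> real" where
  "heaviside x = (if x \<ge> 0 then 1 else 0)"

definition wgt :: "real \<Rightarrow> real \<Rightarrow> real \<Rightarrow> real \<Rightarrow> real \<Rightarrow> real \<Rightarrow> real \<Rightarrow> real" where
  "wgt \<alpha> \<beta> \<gamma> A B t x =
     x powr \<alpha> * (1 - x) powr \<beta> * \<bar>x - t\<bar> powr \<gamma> * (A + B * heaviside (x - t))"

definition monic_OPS :: "(real \<Rightarrow> real) \<Rightarrow> (nat \<Rightarrow> real poly) \<Rightarrow> bool" where
  "monic_OPS w P \<longleftrightarrow>
     (\<forall>n. degree (P n) = n \<and> lead_coeff (P n) = 1) \<and>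
     (\<forall>m n. m \<noteq> n \<longrightarrow> integral {0..1} (\<lambda>x. poly (P m) x * poly (P n) x * w x) = 0)"

definition hn :: "(real \<Rightarrow> real) \<Rightarrow> (nat \<Rightarrow> real poly) \<Rightarrow> nat \<Rightarrow> real" where
  "hn w P n = integral {0..1} (\<lambda>x. (poly (P n) x)^2 * w x)"

definition Rn :: "real \<Rightarrow> (real \<Rightarrow> real) \<Rightarrow> (nat \<Rightarrow> real poly) \<Rightarrow> nat \<Rightarrow> real" where
  "Rn \<beta> w P n = \<beta> / hn w P n * integral {0..1} (\<lambda>y. (poly (P n) y)^2 * w y / (1 - y))"

definition yn :: "real \<Rightarrow> (real \<Rightarrow> real) \<Rightarrow> (nat \<Rightarrow> real poly) \<Rightarrow> nat \<Rightarrow> real" where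
  "yn \<alpha> w P n = \<alpha> / hn w P (n - 1) *
     integral {0..1} (\<lambda>y. poly (P n) y * poly (P (n - 1)) y * w y / y)"

definition rn :: "real \<Rightarrow> (real \<Rightarrow> real) \<Rightarrow> (nat \<Rightarrow> real poly) \<Rightarrow> nat \<Rightarrow> real" where
  "rn \<beta> w P n = \<beta> / hn w P (n - 1) *
     integral {0..1} (\<lambda>y. poly (P n) y * poly (P (n - 1)) y * w y / (1 - y))"

end

theory Submission imports Defs begin

locale opsetting =
  fixes al be ga A B t :: real and P :: "nat \<Rightarrow> real poly"
  assumes al: "al > 0" and be: "be > 0" and ga: "ga > 0"
    and A: "A \<ge> 0" and AB: "A + B \<ge> 0" and ABnz: "\<not> (A = 0 \<and> A + B = 0)"
    and t0: "0 < t" and t1: "t < 1"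
    and ops: "monic_OPS (wgt al be ga A B t) P"
begin

abbreviation "w \<equiv> wgt al be ga A B t"

lemma w_alt: "w x = x powr al * (1-x) powr be * (A * \<bar>x-t\<bar> powr ga + B * (max (x-t) 0) powr ga)"
proof (cases "x \<ge> t")
  case True
  then show ?thesis by (simp add: wgt_def heaviside_def algebra_simps max_def)
next
  case False
  then show ?thesis using ga by (simp add: wgt_def heaviside_def algebra_simps max_def)
qed

lemma w_cont: "continuous_on {0..1} w"
proof -
  have "continuous_on {0..1} (\<lambda>x. x powr al * (1-x) powr be * (A * \<bar>x-t\<bar> powr ga + B * (max (x-t) 0) powr ga))"
    using al be ga
    by (intro continuous_intros continuous_on_powr') auto
  then show ?thesis by (simp add: w_alt)
qed

lemma heav01: "heaviside x = 0 \<or> heaviside x = 1" by (simp add: heaviside_def)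

lemma w_nonneg: "x \<in> {0..1} \<Longrightarrow> w x \<ge> 0"
proof -
  have "A + B * heaviside (x-t) \<ge> 0" using heav01[of "x-t"] A AB by auto
  thus "x \<in> {0..1} \<Longrightarrow> w x \<ge> 0" by (simp add: wgt_def)
qed

lemma w0: "w 0 = 0" using al by (simp add: wgt_def)
lemma w1: "w 1 = 0" using be by (simp add: wgt_def)

lemma w_bound: assumes "x \<in> {0..1}" shows "\<bar>w x\<bar> \<le> (\<bar>A\<bar> + \<bar>B\<bar>) * (x powr al * (1-x) powr be)"
proof -
  have h: "\<bar>A + B * heaviside (x-t)\<bar> \<le> \<bar>A\<bar> + \<bar>B\<bar>" using heav01[of "x-t"] by auto
  have "\<bar>x - t\<bar> \<le> 1" using assms t0 t1 by auto
  then have g: "\<bar>x - t\<bar> powr ga \<le> 1" using ga assms by (intro powr_le1) auto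
  have "\<bar>w x\<bar> = x powr al * (1-x) powr be * (\<bar>x-t\<bar> powr ga * \<bar>A + B * heaviside (x-t)\<bar>)"
    using assms by (simp add: wgt_def abs_mult)
  also have "\<dots> \<le> x powr al * (1-x) powr be * (1 * (\<bar>A\<bar> + \<bar>B\<bar>))"
    by (intro mult_left_mono mult_mono g h) auto
  finally show ?thesis by (simp add: mult_ac)
qed

lemma deriv_powr_const:
  assumes "(g has_real_derivative m) (at z)" "g z > 0"
  shows "((\<lambda>y. g y powr c) has_real_derivative (g z powr c * (m * c / g z))) (at z)"
  using DERIV_powr[OF assms(1) assms(2) DERIV_const] by simp

lemma w_deriv:
  assumes x: "0 < x" "x < 1" "x \<noteq> t"
  shows "(w has_real_derivative w x * (al/x - be/(1-x) + ga/(x-t))) (at x)"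
proof (cases "x < t")
  case True
  have m: "ga/(x-t) = - ga/(t-x)" using True by (simp add: field_simps)
  define f where "f y = A * (y powr al * (1-y) powr be * (t-y) powr ga)" for y
  have eq: "f y = w y" if "y \<in> {0<..<t}" for y using that
    by (simp add: f_def wgt_def heaviside_def)
  have d1: "((\<lambda>y. y powr al) has_real_derivative (x powr al * (1 * al / x))) (at x)"
    by (rule deriv_powr_const) (auto intro!: derivative_eq_intros simp: x)
  have d2: "((\<lambda>y. (1-y) powr be) has_real_derivative ((1-x) powr be * ((-1) * be / (1-x)))) (at x)"
    by (rule deriv_powr_const) (auto intro!: derivative_eq_intros simp: x)
  have d3: "((\<lambda>y. (t-y) powr ga) has_real_derivative ((t-x) powr ga * ((-1) * ga / (t-x)))) (at x)"
    by (rule deriv_powr_const) (auto intro!: derivative_eq_intros simp: True)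
  have "(f has_real_derivative w x * (al/x - be/(1-x) + ga/(x-t))) (at x)"
    unfolding f_def
    by (rule DERIV_cong[OF DERIV_cmult[OF DERIV_mult[OF DERIV_mult[OF d1 d2] d3]]])
      (use x True in \<open>simp add: eq[symmetric] f_def m field_simps\<close>)
  then show ?thesis
    by (rule has_field_derivative_transform_within_open[where S="{0<..<t}"]) (use x True eq in auto)
next
  case False
  then have xt: "t < x" using x by auto
  define f where "f y = (A + B) * (y powr al * (1-y) powr be * (y-t) powr ga)" for y
  have eq: "f y = w y" if "y \<in> {t<..<1}" for y using that
    by (simp add: f_def wgt_def heaviside_def)
  have d1: "((\<lambda>y. y powr al) has_real_derivative (x powr al * (1 * al / x))) (at x)"
    by (rule deriv_powr_const) (auto intro!: derivative_eq_intros simp: x)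
  have d2: "((\<lambda>y. (1-y) powr be) has_real_derivative ((1-x) powr be * ((-1) * be / (1-x)))) (at x)"
    by (rule deriv_powr_const) (auto intro!: derivative_eq_intros simp: x)
  have d3: "((\<lambda>y. (y-t) powr ga) has_real_derivative ((x-t) powr ga * (1 * ga / (x-t)))) (at x)"
    by (rule deriv_powr_const) (auto intro!: derivative_eq_intros simp: xt)
  have "(f has_real_derivative w x * (al/x - be/(1-x) + ga/(x-t))) (at x)"
    unfolding f_def
    by (rule DERIV_cong[OF DERIV_cmult[OF DERIV_mult[OF DERIV_mult[OF d1 d2] d3]]])
      (use x xt in \<open>simp add: eq[symmetric] f_def field_simps\<close>)
  then show ?thesis
    by (rule has_field_derivative_transform_within_open[where S="{t<..<1}"]) (use x xt eq in auto)
qed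


lemma poly_bound: fixes q :: "real poly" obtains M where "M > 0" "\<And>x. x \<in> {0..1} \<Longrightarrow> \<bar>poly q x\<bar> \<le> M"
proof -
  have "bounded ((\<lambda>x. poly q x) ` {0..1})"
    by (intro compact_imp_bounded compact_continuous_image) (auto intro: continuous_intros)
  then obtain M where "M > 0" "\<And>x. x \<in> {0..1} \<Longrightarrow> norm (poly q x) \<le> M"
    by (auto simp: bounded_pos)
  then show ?thesis using that by auto
qed

lemma int_cont: "(\<lambda>x. poly q x * w x) integrable_on {0..1}"
  by (intro integrable_continuous_real continuous_intros w_cont)

lemma int_powr0: "(\<lambda>x. x powr al * (al / x)) integrable_on {0..1}"
proof -
  have "((\<lambda>x. x powr al * (1 * al / x)) has_integral (1 powr al - 0 powr al)) {0..1}"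
  proof (rule fundamental_theorem_of_calculus_strong[where S="{0,1}"])
    show "continuous_on {0..1} (\<lambda>x. x powr al)"
      using al by (intro continuous_on_powr' continuous_intros) auto
    fix x :: real assume "x \<in> {0..1} - {0,1}"
    then show "((\<lambda>x. x powr al) has_vector_derivative x powr al * (1 * al / x)) (at x)"
      unfolding has_real_derivative_iff_has_vector_derivative[symmetric]
      by (intro deriv_powr_const) (auto intro!: derivative_eq_intros)
  qed auto
  then show ?thesis by auto
qed

lemma int_powr1: "(\<lambda>x. (1-x) powr be * (be / (1-x))) integrable_on {0..1}"
proof -
  have "((\<lambda>x. (1-x) powr be * ((-1) * be / (1-x))) has_integral ((1-1) powr be - (1-0) powr be)) {0..1}"
  proof (rule fundamental_theorem_of_calculus_strong[where S="{0,1}"])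
    show "continuous_on {0..1} (\<lambda>x. (1-x) powr be)"
      using be by (intro continuous_on_powr' continuous_intros) auto
    fix x :: real assume "x \<in> {0..1} - {0,1}"
    then show "((\<lambda>x. (1-x) powr be) has_vector_derivative (1-x) powr be * ((-1) * be / (1-x))) (at x)"
      unfolding has_real_derivative_iff_has_vector_derivative[symmetric]
      by (intro deriv_powr_const) (auto intro!: derivative_eq_intros)
  qed auto
  then have "(\<lambda>x. (1-x) powr be * ((-1) * be / (1-x))) integrable_on {0..1}" by auto
  then have "(\<lambda>x. - ((1-x) powr be * ((-1) * be / (1-x)))) integrable_on {0..1}"
    by (rule integrable_neg)
  then show ?thesis by simp
qed

lemma spike01:
  fixes f :: "real \<Rightarrow> real"
  assumes "f integrable_on S" "S - T \<subseteq> {a}" "T - S \<subseteq> {a}"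
  shows "f integrable_on T"
proof (rule integrable_spike_set[OF assms(1)])
  show "negligible {x \<in> S - T. f x \<noteq> 0}"
    by (rule negligible_subset[of "{a}"]) (use assms(2) in auto)
  show "negligible {x \<in> T - S. f x \<noteq> 0}"
    by (rule negligible_subset[of "{a}"]) (use assms(3) in auto)
qed

lemma int_x: "(\<lambda>x. poly q x * w x / x) integrable_on {0..1}"
proof -
  obtain M where M: "M > 0" "\<And>x. x \<in> {0..1} \<Longrightarrow> \<bar>poly q x\<bar> \<le> M" using poly_bound[of q] by blast
  define K where "K = M * (\<bar>A\<bar> + \<bar>B\<bar>) / al"
  have "(\<lambda>x. poly q x * w x / x) integrable_on {0<..1}"
  proof (rule measurable_bounded_by_integrable_imp_integrable_real)
    have "continuous_on {0<..1} (\<lambda>x. poly q x * w x / x)"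
      by (intro continuous_intros continuous_on_subset[OF w_cont]) auto
    then show "(\<lambda>x. poly q x * w x / x) \<in> borel_measurable (lebesgue_on {0<..1})"
      by (rule continuous_imp_measurable_on_sets_lebesgue) auto
    show "(\<lambda>x. K * (x powr al * (al / x))) integrable_on {0<..1}"
      using integrable_on_cmult_left[OF int_powr0, of K] by - (rule spike01[where a=0], simp, auto)
    fix x :: real assume x: "x \<in> {0<..1}"
    have b1: "\<bar>w x\<bar> \<le> (\<bar>A\<bar> + \<bar>B\<bar>) * (x powr al * (1-x) powr be)" using x by (intro w_bound) auto
    have "(1-x) powr be \<le> 1" using x be by (intro powr_le1) auto
    then have "(\<bar>A\<bar> + \<bar>B\<bar>) * (x powr al * (1-x) powr be) \<le> (\<bar>A\<bar> + \<bar>B\<bar>) * (x powr al * 1)"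
      by (intro mult_left_mono) auto
    then have b2: "\<bar>w x\<bar> \<le> (\<bar>A\<bar> + \<bar>B\<bar>) * x powr al"
      using b1 by simp
    have "\<bar>poly q x * w x / x\<bar> = \<bar>poly q x\<bar> * \<bar>w x\<bar> / x" using x by (simp add: abs_mult)
    also have "\<dots> \<le> M * ((\<bar>A\<bar> + \<bar>B\<bar>) * x powr al) / x"
      using x M(2)[of x] b2 by (intro divide_right_mono mult_mono) auto
    also have "\<dots> = K * (x powr al * (al / x))" using al by (simp add: K_def)
    finally show "\<bar>poly q x * w x / x\<bar> \<le> K * (x powr al * (al / x))" .
  qed auto
  then show ?thesis by (rule spike01[where a=0]) auto
qed

lemma int_1x: "(\<lambda>x. poly q x * w x / (1-x)) integrable_on {0..1}"
proof -
  obtain M where M: "M > 0" "\<And>x. x \<in> {0..1} \<Longrightarrow> \<bar>poly q x\<bar> \<le> M" using poly_bound[of q] by blast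
  define K where "K = M * (\<bar>A\<bar> + \<bar>B\<bar>) / be"
  have "(\<lambda>x. poly q x * w x / (1-x)) integrable_on {0..<1}"
  proof (rule measurable_bounded_by_integrable_imp_integrable_real)
    have "continuous_on {0..<1} (\<lambda>x. poly q x * w x / (1-x))"
      by (intro continuous_intros continuous_on_subset[OF w_cont]) auto
    then show "(\<lambda>x. poly q x * w x / (1-x)) \<in> borel_measurable (lebesgue_on {0..<1})"
      by (rule continuous_imp_measurable_on_sets_lebesgue) auto
    show "(\<lambda>x. K * ((1-x) powr be * (be / (1-x)))) integrable_on {0..<1}"
      using integrable_on_cmult_left[OF int_powr1, of K] by - (rule spike01[where a=1], simp, auto)
    fix x :: real assume x: "x \<in> {0..<1}"
    have b1: "\<bar>w x\<bar> \<le> (\<bar>A\<bar> + \<bar>B\<bar>) * (x powr al * (1-x) powr be)" using x by (intro w_bound) auto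
    have "x powr al \<le> 1" using x al by (intro powr_le1) auto
    then have "(\<bar>A\<bar> + \<bar>B\<bar>) * (x powr al * (1-x) powr be) \<le> (\<bar>A\<bar> + \<bar>B\<bar>) * (1 * (1-x) powr be)"
      by (intro mult_left_mono mult_right_mono) auto
    then have b2: "\<bar>w x\<bar> \<le> (\<bar>A\<bar> + \<bar>B\<bar>) * (1-x) powr be"
      using b1 by simp
    have "\<bar>poly q x * w x / (1-x)\<bar> = \<bar>poly q x\<bar> * \<bar>w x\<bar> / (1-x)" using x by (simp add: abs_mult)
    also have "\<dots> \<le> M * ((\<bar>A\<bar> + \<bar>B\<bar>) * (1-x) powr be) / (1-x)"
      using x M(2)[of x] b2 by (intro divide_right_mono mult_mono) auto
    also have "\<dots> = K * ((1-x) powr be * (be / (1-x)))" using be by (simp add: K_def)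
    finally show "\<bar>poly q x * w x / (1-x)\<bar> \<le> K * ((1-x) powr be * (be / (1-x)))" .
  qed auto
  then show ?thesis by (rule spike01[where a=1]) auto
qed


lemma ibp:
  fixes g :: "real poly"
  shows "integral {0..1} (\<lambda>x. poly (pderiv ([:-t,1:]*g)) x * w x)
    + (al+be+ga) * integral {0..1} (\<lambda>x. poly g x * w x)
    - al*t * integral {0..1} (\<lambda>x. poly g x * w x / x)
    - be*(1-t) * integral {0..1} (\<lambda>x. poly g x * w x / (1-x)) = 0"
proof -
  define F where "F x = poly ([:-t,1:]*g) x * w x" for x
  define F' where "F' x = poly (pderiv ([:-t,1:]*g)) x * w x
       + poly ([:-t,1:]*g) x * (w x * (al/x - be/(1-x) + ga/(x-t)))" for x
  have "(F' has_integral (F 1 - F 0)) {0..1}"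
  proof (rule fundamental_theorem_of_calculus_strong[where S="{0,t,1}"])
    show "continuous_on {0..1} F" unfolding F_def
      by (intro continuous_intros w_cont)
    fix x :: real assume x: "x \<in> {0..1} - {0,t,1}"
    then have "(F has_real_derivative F' x) (at x)" unfolding F_def F'_def
      using DERIV_mult[OF poly_DERIV[of "[:-t,1:]*g" x] w_deriv[of x]] by (auto simp: mult.commute)
    then show "(F has_vector_derivative F' x) (at x)"
      by (simp add: has_real_derivative_iff_has_vector_derivative)
  qed auto
  then have I: "(F' has_integral 0) {0..1}" by (simp add: F_def w0 w1)
  define G where "G x = poly (pderiv ([:-t,1:]*g)) x * w x
    + (al+be+ga) * (poly g x * w x)
    - al*t * (poly g x * w x / x)
    - be*(1-t) * (poly g x * w x / (1-x))" for x
  have GF: "G x = F' x" if "x \<in> {0..1} - {0,t,1}" for x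
  proof -
    have x: "x \<noteq> 0" "x \<noteq> 1" "x \<noteq> t" using that by auto
    then have nz: "x - t \<noteq> 0" "1 - x \<noteq> 0" by auto
    have e1: "(x-t)*(al/x) = al - al*t/x" using x by (simp add: field_simps)
    have e2: "(x-t)*(be/(1-x)) = be*(1-t)/(1-x) - be" using nz by (simp add: field_simps)
    have e3: "(x-t)*(ga/(x-t)) = ga" using nz by simp
    have "poly ([:-t,1:]*g) x * (w x * (al/x - be/(1-x) + ga/(x-t)))
      = poly g x * w x * ((x-t)*(al/x) - (x-t)*(be/(1-x)) + (x-t)*(ga/(x-t)))"
      by (simp add: algebra_simps)
    also have "\<dots> = poly g x * w x * (al - al*t/x - (be*(1-t)/(1-x) - be) + ga)"
      by (simp only: e1 e2 e3)
    also have "\<dots> = (al+be+ga) * (poly g x * w x) - al*t * (poly g x * w x / x)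
        - be*(1-t) * (poly g x * w x / (1-x))"
      by (simp add: algebra_simps)
    finally show ?thesis unfolding G_def F'_def by simp
  qed
  have "(G has_integral (integral {0..1} (\<lambda>x. poly (pderiv ([:-t,1:]*g)) x * w x)
    + (al+be+ga) * integral {0..1} (\<lambda>x. poly g x * w x)
    - al*t * integral {0..1} (\<lambda>x. poly g x * w x / x)
    - be*(1-t) * integral {0..1} (\<lambda>x. poly g x * w x / (1-x)))) {0..1}"
    unfolding G_def
    by (intro has_integral_diff has_integral_add has_integral_mult_right
        integrable_integral int_cont int_x int_1x)
  moreover have "(G has_integral 0) {0..1}"
    by (rule has_integral_spike_finite[OF _ _ I, where S="{0,t,1}"]) (use GF in auto)
  ultimately show ?thesis by (rule has_integral_unique)
qed


definition L :: "real poly \<Rightarrow> real" where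
  "L q = integral {0..1} (\<lambda>x. poly q x * w x)"

lemma L_add: "L (p + q) = L p + L q"
  unfolding L_def by (simp add: distrib_right integral_add int_cont)

lemma L_diff: "L (p - q) = L p - L q"
  unfolding L_def by (simp add: left_diff_distrib integral_diff int_cont)

lemma L_smult: "L (smult c p) = c * L p"
  unfolding L_def by (simp add: mult.assoc)

lemma L_0: "L 0 = 0" unfolding L_def by simp

lemma degP: "degree (P n) = n"
  using ops unfolding monic_OPS_def by auto

lemma lcP: "coeff (P n) n = 1"
proof -
  have "lead_coeff (P n) = 1" using ops unfolding monic_OPS_def by blast
  then show ?thesis by (simp add: degP)
qed

lemma orthP: "m \<noteq> n \<Longrightarrow> L (P m * P n) = 0"
  using ops unfolding monic_OPS_def L_def by auto

lemma cP_hi: "n < i \<Longrightarrow> coeff (P n) i = 0"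
  using degP[of n] by (simp add: coeff_eq_0)

lemma orth_coeff: "(\<forall>i\<ge>k. coeff q i = 0) \<Longrightarrow> k \<le> N \<Longrightarrow> L (q * P N) = 0"
proof (induction k arbitrary: q)
  case 0
  then have "q = 0" by (auto simp: poly_eq_iff)
  then show ?case by (simp add: L_0)
next
  case (Suc k)
  define r where "r = q - smult (coeff q k) (P k)"
  have "\<forall>i\<ge>k. coeff r i = 0"
  proof (intro allI impI)
    fix i assume "k \<le> i"
    then show "coeff r i = 0"
      using Suc.prems(1) lcP[of k] cP_hi[of k i] by (cases "i = k") (auto simp: r_def)
  qed
  then have "L (r * P N) = 0" using Suc by auto
  moreover have "q * P N = smult (coeff q k) (P k * P N) + r * P N"
    unfolding r_def by (simp add: left_diff_distrib)
  moreover have "L (P k * P N) = 0" using Suc.prems by (intro orthP) auto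
  ultimately show ?case by (simp add: L_add L_smult)
qed

lemma orth_deg: "degree q < N \<Longrightarrow> L (q * P N) = 0"
  by (rule orth_coeff[of N]) (auto simp: coeff_eq_0)

abbreviation "h n \<equiv> L (P n * P n)"

lemma orth_le: assumes "degree q \<le> n" shows "L (q * P n) = coeff q n * h n"
proof -
  define r where "r = q - smult (coeff q n) (P n)"
  have "\<forall>i\<ge>n. coeff r i = 0"
  proof (intro allI impI)
    fix i assume "n \<le> i"
    then show "coeff r i = 0"
      using assms lcP[of n] cP_hi[of n i] by (cases "i = n") (auto simp: r_def coeff_eq_0)
  qed
  then have "L (r * P n) = 0" by (intro orth_coeff[of n]) auto
  moreover have "q * P n = smult (coeff q n) (P n * P n) + r * P n"
    unfolding r_def by (simp add: left_diff_distrib)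
  ultimately show ?thesis by (simp add: L_add L_smult)
qed

lemma orth_T: assumes "degree q \<le> Suc n"
  shows "L (q * P n) = (coeff q n - coeff (P (Suc n)) n * coeff q (Suc n)) * h n"
proof -
  define r where "r = q - smult (coeff q (Suc n)) (P (Suc n))"
  have "degree r \<le> n"
  proof (rule degree_le, intro allI impI)
    fix i assume "n < i"
    then show "coeff r i = 0"
      using assms lcP[of "Suc n"] cP_hi[of "Suc n" i] by (cases "i = Suc n") (auto simp: r_def coeff_eq_0)
  qed
  then have "L (r * P n) = coeff r n * h n" by (rule orth_le)
  moreover have "q * P n = smult (coeff q (Suc n)) (P (Suc n) * P n) + r * P n"
    unfolding r_def by (simp add: left_diff_distrib)
  moreover have "L (P (Suc n) * P n) = 0" by (intro orthP) auto
  moreover have "coeff r n = coeff q n - coeff (P (Suc n)) n * coeff q (Suc n)"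
    by (simp add: r_def)
  ultimately show ?thesis by (simp add: L_add L_smult)
qed


lemma w_pos_point: obtains a b where "0 \<le> a" "a < b" "b \<le> 1" "\<And>x. x \<in> {a<..<b} \<Longrightarrow> w x > 0"
proof (cases "A > 0")
  case True
  have "w x > 0" if "x \<in> {0<..<t}" for x
    using that True t1 by (simp add: wgt_def heaviside_def)
  then show ?thesis using that[of 0 t] t0 t1 by auto
next
  case False
  then have AB': "A + B > 0" using A AB ABnz by auto
  have "w x > 0" if "x \<in> {t<..<1}" for x
    using that AB' t0 t1 by (simp add: wgt_def heaviside_def)
  then show ?thesis using that[of t 1] t0 t1 by auto
qed

lemma h_pos: "h n > 0"
proof -
  obtain a b where ab: "0 \<le> a" "a < b" "b \<le> 1" "\<And>x. x \<in> {a<..<b} \<Longrightarrow> w x > 0"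
    using w_pos_point by blast
  have "P n \<noteq> 0" using lcP[of n] by auto
  then have "finite {x. poly (P n) x = 0}" by (rule poly_roots_finite)
  moreover have "infinite {a<..<b}" using ab by simp
  ultimately have "infinite ({a<..<b} - {x. poly (P n) x = 0})" by (rule Diff_infinite_finite)
  then obtain x0 where x0: "x0 \<in> {a<..<b}" "poly (P n) x0 \<noteq> 0"
    using infinite_imp_nonempty by blast
  define f where "f x = poly (P n * P n) x * w x" for x
  have cont: "continuous_on (cbox 0 1) f" unfolding f_def
    by (simp only: cbox_interval) (intro continuous_intros w_cont)
  have nn: "0 \<le> f x" if "x \<in> cbox 0 1" for x
    using that w_nonneg[of x] by (simp add: f_def cbox_interval)
  have I: "(\<lambda>x. poly (P n * P n) x * w x) integrable_on {0..1}" by (rule int_cont)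
  have "h n \<ge> 0" unfolding L_def
    by (rule integral_nonneg[OF I]) (use nn in \<open>auto simp: f_def cbox_interval\<close>)
  moreover have "h n \<noteq> 0"
  proof
    assume "h n = 0"
    then have "(f has_integral 0) (cbox 0 1)"
      using int_cont[of "P n * P n"] unfolding L_def f_def cbox_interval
      by (metis integrable_integral)
    moreover have nnb: "0 \<le> f x" if "x \<in> box 0 1" for x
      using nn[of x] that by (auto simp: box_real cbox_interval)
    ultimately have "f x0 = 0"
      by (intro has_integral_0_cbox_imp_0[OF cont]) (use x0 ab in \<open>auto simp: cbox_interval box_real\<close>)
    moreover have "f x0 > 0" using x0 ab(4)[of x0] by (auto simp: f_def zero_less_mult_iff linorder_neq_iff)
    ultimately show False by simp
  qed
  ultimately show ?thesis by simp
qed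


definition pp :: "nat \<Rightarrow> real" where "pp j = (if j = 0 then 0 else coeff (P j) (j - 1))"

lemma pp_Suc: "coeff (P (Suc k)) k = pp (Suc k)" by (simp add: pp_def)

lemma pd_id1: "pderiv c = 1 \<Longrightarrow> pderiv (c * (a * b)) = (a + c * pderiv a) * b + (c * pderiv b) * a"
  for a b c :: "real poly"
  by (simp add: pderiv_mult algebra_simps)

lemma pd_id2: "pderiv (c * (d * a * a)) = (pderiv (c * (d * a)) + c * d * pderiv a) * a"
  for a d c :: "real poly"
  by (simp add: pderiv_mult algebra_simps)

lemma deg_mul1: "degree c \<le> 1 \<Longrightarrow> degree p \<le> k \<Longrightarrow> degree (c * p) \<le> Suc k"
  for c p :: "real poly"
  using degree_mult_le[of c p] by linarith

lemma coeff_lin: fixes p :: "real poly" shows "coeff ([:a,1:] * p) (Suc i) = a * coeff p (Suc i) + coeff p i"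
  "coeff ([:a,1:] * p) 0 = a * coeff p 0"
  by (simp_all add: mult_pCons_left)

lemma idA_poly:
  "L (pderiv ([:-t,1:] * (P (Suc m) * P m))) = (- pp (Suc m) - t * real (Suc m)) * h m"
proof -
  define qa where "qa = P (Suc m) + [:-t,1:] * pderiv (P (Suc m))"
  define qb where "qb = [:-t,1:] * pderiv (P m)"
  have split: "pderiv ([:-t,1:] * (P (Suc m) * P m)) = qa * P m + qb * P (Suc m)"
    unfolding qa_def qb_def by (rule pd_id1) (simp add: pderiv_pCons)
  have "degree qb < Suc m"
  proof (cases m)
    case 0
    then have "pderiv (P m) = 0" using degP[of m] by (simp add: pderiv_eq_0_iff)
    then show ?thesis by (simp add: qb_def)
  next
    case (Suc k)
    have "degree qb \<le> Suc k"
      unfolding qb_def by (rule deg_mul1) (simp_all add: degree_pderiv degP Suc)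
    then show ?thesis using Suc by simp
  qed
  then have Lb: "L (qb * P (Suc m)) = 0" by (rule orth_deg)
  have dqa: "degree qa \<le> Suc m"
  proof -
    have a: "degree ([:-t,1:] * pderiv (P (Suc m))) \<le> Suc m"
      by (rule deg_mul1) (simp_all add: degree_pderiv degP)
    show ?thesis unfolding qa_def
      by (rule degree_add_le[OF _ a]) (simp add: degP)
  qed
  have c1: "coeff qa (Suc m) = real m + 2"
    by (simp add: qa_def coeff_lin coeff_pderiv lcP cP_hi)
  have c2: "coeff qa m = real (Suc m) * pp (Suc m) - t * real (Suc m)"
  proof (cases m)
    case 0
    then show ?thesis by (simp add: qa_def coeff_lin coeff_pderiv lcP pp_Suc[symmetric])
  next
    case (Suc k)
    then show ?thesis
      by (simp add: qa_def coeff_lin coeff_pderiv lcP pp_Suc[symmetric] algebra_simps)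
  qed
  have "L (qa * P m) = (coeff qa m - pp (Suc m) * coeff qa (Suc m)) * h m"
    using orth_T[OF dqa] by (simp add: pp_Suc)
  then show ?thesis unfolding split L_add Lb c1 c2 by (simp add: algebra_simps)
qed


lemma idB_poly:
  "L (pderiv ([:-t,1:] * ([:0,1:] * P j * P j)))
     = (2 * real j * pp j - t * (2 * real j + 1) - pp (Suc j) * (2 * real j + 2)) * h j"
proof -
  define q1 where "q1 = pderiv ([:-t,1:] * ([:0,1:] * P j)) + [:-t,1:] * [:0,1:] * pderiv (P j)"
  have split: "pderiv ([:-t,1:] * ([:0,1:] * P j * P j)) = q1 * P j"
    unfolding q1_def by (rule pd_id2)
  have q1': "q1 = pderiv ([:-t,1:] * pCons 0 (P j)) + [:-t,1:] * pCons 0 (pderiv (P j))"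
    by (simp add: q1_def)
  have dq: "degree q1 \<le> Suc j"
  proof -
    have "degree ([:-t,1:] * pCons 0 (P j)) \<le> Suc (Suc j)"
      by (rule deg_mul1) (simp_all add: degP degree_pCons_le)
    then have d1: "degree (pderiv ([:-t,1:] * pCons 0 (P j))) \<le> Suc j"
      by (simp add: degree_pderiv)
    have d2: "degree ([:-t,1:] * pCons 0 (pderiv (P j))) \<le> Suc j"
    proof (cases j)
      case 0
      then have "pderiv (P j) = 0" using degP[of j] by (simp add: pderiv_eq_0_iff)
      then show ?thesis by simp
    next
      case (Suc k)
      have "degree (pCons 0 (pderiv (P j))) \<le> j"
        using degree_pCons_le[of 0 "pderiv (P j)"] Suc by (simp add: degree_pderiv degP)
      then show ?thesis by (rule deg_mul1[rotated]) simp
    qed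
    show ?thesis unfolding q1' by (rule degree_add_le[OF d1 d2])
  qed
  have c1: "coeff q1 (Suc j) = 2 * real j + 2"
    by (cases j) (simp_all add: q1' coeff_lin coeff_pderiv lcP cP_hi algebra_simps)
  have c2: "coeff q1 j = 2 * real j * pp j - t * (2 * real j + 1)"
  proof (cases j)
    case 0
    then show ?thesis by (simp add: q1' coeff_lin coeff_pderiv lcP pp_def)
  next
    case (Suc k)
    show ?thesis
    proof (cases k)
      case 0
      then show ?thesis using Suc
        by (simp add: q1' coeff_lin coeff_pderiv lcP pp_Suc[symmetric] algebra_simps)
    next
      case (Suc l)
      then show ?thesis using \<open>j = Suc k\<close>
        by (simp add: q1' coeff_lin coeff_pderiv lcP pp_Suc[symmetric] algebra_simps)
    qed
  qed
  have "L (q1 * P j) = (coeff q1 j - pp (Suc j) * coeff q1 (Suc j)) * h j"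
    using orth_T[OF dq] by (simp add: pp_Suc)
  then show ?thesis unfolding split c1 c2 by (simp add: algebra_simps)
qed

lemma LX: "L ([:0,1:] * P j * P j) = (pp j - pp (Suc j)) * h j"
proof -
  have d: "degree ([:0,1:] * P j) \<le> Suc j" by (simp add: degP)
  have "coeff ([:0,1:] * P j) j = pp j"
    by (cases j) (simp_all add: pp_def)
  moreover have "coeff ([:0,1:] * P j) (Suc j) = 1" by (simp add: lcP)
  ultimately show ?thesis using orth_T[OF d] by (simp add: pp_Suc algebra_simps)
qed




definition Q :: "nat \<Rightarrow> real" where
  "Q j = integral {0..1} (\<lambda>x. poly (P j * P j) x * w x / (1-x))"

lemma idB: "(1-t) * (be * Q j / h j) = (2*real j + al+be+ga) * pp j - (2*real j + 2 + al+be+ga) * pp (Suc j)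
   - t * (2 * real j + 1 + al + be) + be"
proof -
  define g where "g = [:0,1:] * P j * P j"
  have e1: "integral {0..1} (\<lambda>x. poly g x * w x / x) = h j"
    unfolding L_def
  proof (rule integral_cong)
    fix x :: real assume "x \<in> {0..1}"
    show "poly g x * w x / x = poly (P j * P j) x * w x"
      by (cases "x = 0") (simp_all add: g_def w0)
  qed
  have "integral {0..1} (\<lambda>x. poly g x * w x / (1-x))
      = integral {0..1} (\<lambda>x. poly (P j * P j) x * w x / (1-x) - poly (P j * P j) x * w x)"
  proof (rule integral_cong)
    fix x :: real assume "x \<in> {0..1}"
    show "poly g x * w x / (1-x) = poly (P j * P j) x * w x / (1-x) - poly (P j * P j) x * w x"
    proof (cases "x = 1")
      case True then show ?thesis by (simp add: w1)
    next
      case False then have "1 - x \<noteq> 0" by simp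
      then show ?thesis by (simp add: g_def field_simps)
    qed
  qed
  also have "\<dots> = Q j - h j"
    unfolding Q_def L_def by (rule integral_diff[OF int_1x int_cont])
  finally have e2: "integral {0..1} (\<lambda>x. poly g x * w x / (1-x)) = Q j - h j" .
  have "L (pderiv ([:-t,1:] * g)) + (al+be+ga) * L g - al*t*h j - be*(1-t)*(Q j - h j) = 0"
    using ibp[of g] unfolding e1 e2 L_def .
  then have "(2 * real j * pp j - t * (2 * real j + 1) - pp (Suc j) * (2 * real j + 2)) * h j
     + (al+be+ga) * ((pp j - pp (Suc j)) * h j) - al*t*h j - be*(1-t)*(Q j - h j) = 0"
    unfolding g_def idB_poly LX .
  then show ?thesis using h_pos[of j] by (simp add: field_simps)
qed

lemma idA: "(1-t) * (be * integral {0..1} (\<lambda>x. poly (P (Suc m) * P m) x * w x / (1-x)) / h m)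
   + t * (al * integral {0..1} (\<lambda>x. poly (P (Suc m) * P m) x * w x / x) / h m)
   = - pp (Suc m) - t * real (Suc m)"
proof -
  have "L (pderiv ([:-t,1:] * (P (Suc m) * P m))) + (al+be+ga) * L (P (Suc m) * P m)
    - al*t * integral {0..1} (\<lambda>x. poly (P (Suc m) * P m) x * w x / x)
    - be*(1-t) * integral {0..1} (\<lambda>x. poly (P (Suc m) * P m) x * w x / (1-x)) = 0"
    using ibp[of "P (Suc m) * P m"] unfolding L_def .
  then have "(- pp (Suc m) - t * real (Suc m)) * h m
    - al*t * integral {0..1} (\<lambda>x. poly (P (Suc m) * P m) x * w x / x)
    - be*(1-t) * integral {0..1} (\<lambda>x. poly (P (Suc m) * P m) x * w x / (1-x)) = 0"
    unfolding idA_poly orthP[of "Suc m" m, simplified] by simp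
  then show ?thesis using h_pos[of m] by (simp add: field_simps)
qed

lemma sumB: "(\<Sum>j<n. (1-t) * (be * Q j / h j)) =
   - (2*real n + al+be+ga) * pp n + real n * be - t * (real n * real n + real n * (al+be))"
proof (induction n)
  case 0 then show ?case by (simp add: pp_def)
next
  case (Suc n) show ?case by (simp only: sum.lessThan_Suc Suc.IH idB[of n]) (simp add: algebra_simps)
qed

end


lemma final_alg:
  fixes r y p N a b g t :: real
  assumes "(1-t)*r + t*y = -p - t*N"
  shows "N*b + N*(N+g)*t - (2*N+a+b+g)*(t-1)*r + (2*N+a+b+g)*t*y
     + (-( - (2*N+a+b+g)*p + N*b - t*(N*N + N*(a+b)))) = 0"
  using assms by algebra

theorem mainTheorem5:
  fixes \<alpha> \<beta> \<gamma> A B t :: real and P :: "nat \<Rightarrow> real poly" and n :: nat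
  assumes "\<alpha> > 0" and "\<beta> > 0" and "\<gamma> > 0"
    and "A \<ge> 0" and "A + B \<ge> 0" and "\<not> (A = 0 \<and> A + B = 0)"
    and "0 < t" and "t < 1"
    and "monic_OPS (wgt \<alpha> \<beta> \<gamma> A B t) P"
    and "n \<ge> 1"
  shows "real n * \<beta> + real n * (real n + \<gamma>) * t
     - (2 * real n + \<alpha> + \<beta> + \<gamma>) * (t - 1) * rn \<beta> (wgt \<alpha> \<beta> \<gamma> A B t) P n
     + (2 * real n + \<alpha> + \<beta> + \<gamma>) * t * yn \<alpha> (wgt \<alpha> \<beta> \<gamma> A B t) P n
     + (t - 1) * (\<Sum>j<n. Rn \<beta> (wgt \<alpha> \<beta> \<gamma> A B t) P j) = 0"
proof -
  interpret opsetting \<alpha> \<beta> \<gamma> A B t P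
    using assms by unfold_locales auto
  obtain m where n: "n = Suc m" using assms(10) by (cases n) auto
  have hn_eq: "hn w P k = h k" for k
    unfolding hn_def L_def by (simp add: power2_eq_square)
  have Rn_eq: "Rn \<beta> w P j = \<beta> * Q j / h j" for j
    unfolding Rn_def Q_def hn_eq by (simp add: power2_eq_square)
  define I1 where "I1 = integral {0..1} (\<lambda>x. poly (P (Suc m) * P m) x * w x / (1-x))"
  define I2 where "I2 = integral {0..1} (\<lambda>x. poly (P (Suc m) * P m) x * w x / x)"
  have rn_eq: "rn \<beta> w P n = \<beta> * I1 / h m"
    unfolding rn_def I1_def n hn_eq by simp
  have yn_eq: "yn \<alpha> w P n = \<alpha> * I2 / h m"
    unfolding yn_def I2_def n hn_eq by simp
  have S: "(t - 1) * (\<Sum>j<n. Rn \<beta> w P j) = - (\<Sum>j<n. (1-t) * (\<beta> * Q j / h j))"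
    unfolding Rn_eq sum_distrib_left sum_negf[symmetric] by (rule sum.cong[OF refl]) (use h_pos in \<open>simp add: field_simps less_imp_neq[symmetric]\<close>)
  have Aeq: "(1-t) * (\<beta> * I1 / h m) + t * (\<alpha> * I2 / h m) = - pp n - t * real n"
    using idA[of m] unfolding I1_def I2_def n .
  show ?thesis
    unfolding rn_eq yn_eq S sumB
    using final_alg[OF Aeq, of \<beta> \<gamma> \<alpha>] by simp
qed

end
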